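(* Let $c_0=0.2078750206\ldots$ be the positive number defined by $2\sum_{\nu=1}^{\infty}c_0^{\nu^2/2}=1$. For any $q\in\mathbb{C}$ with $0<|q|\leq c_0$, the zeros of the entire function $z\mapsto\theta(q,z)=\sum_{j=0}^{\infty}q^{j(j+1)/2}z^j$ are separated in modulus, i.e. they can be enumerated so that their moduli form a strictly increasing sequence tending to infinity (in particular all zeros are simple).
   Context: The partial theta function is $\theta(q,z):=\sum_{j=0}^{\infty}q^{j(j+1)/2}z^j$ for $q\in\mathbb{C}$, $0<|q|<1$, $z\in\mathbb{C}$; for fixed $q$ it is an entire function of $z$. *)

theory Defs
  imports "HOL-Analysis.Analysis"
begin

definition partial_theta :: "complex \<Rightarrow> complex \<Rightarrow> complex" where
  "partial_theta q z = (\<Sum>j. q ^ (j * (j + 1) div 2) * z ^ j)"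

text \<open>c0: the positive number with 2 * sum_{nu>=1} c0^(nu^2/2) = 1
  (the series converges only for c0 < 1, and the sum is strictly increasing there).\<close>
definition c0 :: real where
  "c0 = (THE c. 0 < c \<and> c < 1 \<and>
          (\<lambda>\<nu>::nat. 2 * c powr (real ((\<nu> + 1)\<^sup>2) / 2)) sums 1)"

end

theory Submission
  imports Defs "HOL-Complex_Analysis.Complex_Analysis"
begin


definition Fsq :: "real \<Rightarrow> real" where
  "Fsq x = (\<Sum>\<nu>. x ^ ((\<nu>+1)^2))"

lemma Fsq_term_le: "0 \<le> (x::real) \<Longrightarrow> x \<le> 1 \<Longrightarrow> x ^ ((\<nu>+1)^2) \<le> x * x ^ \<nu>"
proof -
  assume "0 \<le> x" "x \<le> 1"
  have le: "\<nu> + 1 \<le> (\<nu>+1)^2" by (simp add: power2_eq_square)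
  have "x ^ ((\<nu>+1)^2) \<le> x ^ (\<nu>+1)" by (rule power_decreasing[OF le \<open>0 \<le> x\<close> \<open>x \<le> 1\<close>])
  then show ?thesis by simp
qed

lemma Fsq_summable: "0 \<le> (x::real) \<Longrightarrow> x < 1 \<Longrightarrow> summable (\<lambda>\<nu>. x ^ ((\<nu>+1)^2))"
proof -
  assume x: "0 \<le> x" "x < 1"
  have s: "summable (\<lambda>\<nu>. x * x ^ \<nu>)" using x by (intro summable_mult[OF summable_geometric]) auto
  have e: "\<forall>\<^sub>F \<nu> in sequentially. norm (x ^ ((\<nu>+1)^2)) \<le> x * x ^ \<nu>"
      using Fsq_term_le[of x] x by simp
  show ?thesis by (rule summable_comparison_test_ev[OF e s])
qed

lemma Fsq_le_geom: "0 \<le> (x::real) \<Longrightarrow> x < 1 \<Longrightarrow> Fsq x \<le> x / (1 - x)"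
proof -
  assume x: "0 \<le> x" "x < 1"
  have "Fsq x \<le> (\<Sum>\<nu>. x * x ^ \<nu>)" unfolding Fsq_def
    using x Fsq_term_le[of x] Fsq_summable[of x] by (intro suminf_le) (auto intro!: summable_mult[OF summable_geometric])
  also have "\<dots> = x * (\<Sum>\<nu>. x ^ \<nu>)" using x by (intro suminf_mult summable_geometric) simp
  also have "\<dots> = x * (1 / (1 - x))" using x by (simp add: suminf_geometric)
  finally show ?thesis by simp
qed

lemma Fsq_mono: "0 \<le> x \<Longrightarrow> x \<le> y \<Longrightarrow> y < 1 \<Longrightarrow> Fsq x \<le> Fsq y"
  unfolding Fsq_def by (intro suminf_le Fsq_summable power_mono) auto

lemma Fsq_strict: "0 \<le> x \<Longrightarrow> x < y \<Longrightarrow> y < 1 \<Longrightarrow> Fsq x < Fsq y"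
proof -
  assume xy: "0 \<le> x" "x < y" "y < 1"
  let ?d = "\<lambda>\<nu>. y ^ ((\<nu>+1)^2) - x ^ ((\<nu>+1)^2)"
  have s: "summable ?d" using xy by (intro summable_diff Fsq_summable) auto
  have "?d 0 \<le> suminf ?d"
    using sum_le_suminf[OF s, of "{0}"] xy by (auto intro!: power_mono)
  also have "suminf ?d = Fsq y - Fsq x" unfolding Fsq_def using xy
    by (intro suminf_diff[symmetric] Fsq_summable) auto
  finally show ?thesis using xy by simp
qed

lemma Fsq_cont: "0 \<le> a \<Longrightarrow> a \<le> b \<Longrightarrow> b < 1 \<Longrightarrow> continuous_on {a..b} Fsq"
proof -
  assume ab: "0 \<le> a" "a \<le> b" "b < 1"
  have "uniform_limit {a..b} (\<lambda>n x. \<Sum>i<n. x ^ ((i+1)^2)) (\<lambda>x. \<Sum>i. x ^ ((i+1)^2)) sequentially"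
  proof (rule Weierstrass_m_test)
    show "norm (x ^ ((n+1)^2)) \<le> b ^ ((n+1)^2)" if "x \<in> {a..b}" for n x
      using that ab by (auto intro!: power_mono)
    show "summable (\<lambda>n. b ^ ((n+1)^2))" using ab
      by (intro Fsq_summable) auto
  qed
  then show ?thesis unfolding Fsq_def[abs_def]
    by (rule uniform_limit_theorem[rotated]) (auto intro!: always_eventually continuous_intros)
qed

lemma powr_half_sq: "0 < x \<Longrightarrow> (x^2) powr (real n / 2) = x ^ n"
proof -
  assume x: "0 < x"
  have "(x^2) powr (real n / 2) = (x powr 2) powr (real n / 2)"
    using x by (simp add: powr_realpow)
  also have "\<dots> = x powr (real n)" by (simp add: powr_powr)
  also have "\<dots> = x ^ n" using x by (simp add: powr_realpow)
  finally show ?thesis .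
qed

lemma c0_prop: "0 < c0 \<and> c0 < 1 \<and> 2 * Fsq (sqrt c0) = 1"
proof -
  define P where "P = (\<lambda>c. 0 < c \<and> c < 1 \<and>
          (\<lambda>\<nu>::nat. 2 * c powr (real ((\<nu> + 1)\<^sup>2) / 2)) sums 1)"
  have P_iff: "P c \<longleftrightarrow> 0 < c \<and> c < 1 \<and> 2 * Fsq (sqrt c) = 1" for c
  proof
    assume "P c"
    then have c: "0 < c" "c < 1" and sm: "(\<lambda>\<nu>::nat. 2 * c powr (real ((\<nu> + 1)\<^sup>2) / 2)) sums 1"
      unfolding P_def by auto
    have eq: "c powr (real ((\<nu> + 1)\<^sup>2) / 2) = sqrt c ^ ((\<nu>+1)^2)" for \<nu>
      using powr_half_sq[of "sqrt c" "(\<nu>+1)^2"] c by simp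
    have "(\<lambda>\<nu>::nat. 2 * sqrt c ^ ((\<nu>+1)^2)) sums 1" using sm by (simp only: eq)
    then have "(\<lambda>\<nu>::nat. 2 * sqrt c ^ ((\<nu>+1)^2)) sums (2 * Fsq (sqrt c))"
      unfolding Fsq_def using c by (intro sums_mult summable_sums Fsq_summable) auto
    with \<open>(\<lambda>\<nu>::nat. 2 * sqrt c ^ ((\<nu>+1)^2)) sums 1\<close> c show "0 < c \<and> c < 1 \<and> 2 * Fsq (sqrt c) = 1"
      using sums_unique2 by blast
  next
    assume c: "0 < c \<and> c < 1 \<and> 2 * Fsq (sqrt c) = 1"
    have eq: "c powr (real ((\<nu> + 1)\<^sup>2) / 2) = sqrt c ^ ((\<nu>+1)^2)" for \<nu>
      using powr_half_sq[of "sqrt c" "(\<nu>+1)^2"] c by simp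
    have "(\<lambda>\<nu>::nat. 2 * sqrt c ^ ((\<nu>+1)^2)) sums (2 * Fsq (sqrt c))"
      unfolding Fsq_def using c by (intro sums_mult summable_sums Fsq_summable) auto
    then show "P c" unfolding P_def using c by (simp only: eq)
  qed
  have ex: "\<exists>c. P c"
  proof -
    have "2 * Fsq (1/5) \<le> 2 * ((1/5) / (1 - 1/5))" using Fsq_le_geom[of "1/5"] by simp
    then have lo: "2 * Fsq (1/5) \<le> 1" by simp
    have "(\<Sum>i<2. (1/2::real) ^ ((i+1)^2)) \<le> Fsq (1/2)" unfolding Fsq_def
      using Fsq_summable[of "1/2::real"] by (intro sum_le_suminf) auto
    then have hi: "1 \<le> 2 * Fsq (1/2)" by (simp add: numeral_2_eq_2)
    have "continuous_on {1/5..1/2} (\<lambda>x. 2 * Fsq x)"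
      by (intro continuous_intros Fsq_cont) auto
    from IVT'[of "\<lambda>x. 2 * Fsq x", OF lo hi _ this] obtain x where
      x: "1/5 \<le> x" "x \<le> 1/2" "2 * Fsq x = 1" by auto
    have "P (x^2)" unfolding P_iff using x by (auto simp: power_less_one_iff)
    then show ?thesis by blast
  qed
  have uniq: "c = c'" if "P c" "P c'" for c c'
  proof -
    from that have c: "0 < c" "c < 1" "2 * Fsq (sqrt c) = 1" "0 < c'" "c' < 1" "2 * Fsq (sqrt c') = 1"
      unfolding P_iff by auto
    have "sqrt c = sqrt c'"
    proof (rule ccontr)
      assume "sqrt c \<noteq> sqrt c'"
      then consider "sqrt c < sqrt c'" | "sqrt c' < sqrt c" by linarith
      then show False
      proof cases
        case 1 then show False using Fsq_strict[of "sqrt c" "sqrt c'"] c by auto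
      next
        case 2 then show False using Fsq_strict[of "sqrt c'" "sqrt c"] c by auto
      qed
    qed
    then show ?thesis by simp
  qed
  obtain c where "P c" using ex by blast
  have "P (THE c. P c)" by (rule theI[of P c]) (use \<open>P c\<close> uniq in blast)+
  then have "P c0" unfolding c0_def P_def .
  then show ?thesis unfolding P_iff .
qed


definition coef :: "complex \<Rightarrow> nat \<Rightarrow> complex" where
  "coef q j = q ^ (j*(j+1) div 2)"

lemma pt_eq: "partial_theta q = (\<lambda>z. \<Sum>j. coef q j * z^j)"
  by (simp add: partial_theta_def coef_def fun_eq_iff)

lemma norm_coef: "norm (coef q j) = sqrt (norm q) ^ (j*(j+1))"
proof -
  have ev: "2 * (j*(j+1) div 2) = j*(j+1)" by simp
  have "norm (coef q j) = norm q ^ (j*(j+1) div 2)" by (simp add: coef_def norm_power)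
  also have "\<dots> = (sqrt (norm q) ^ 2) ^ (j*(j+1) div 2)" by simp
  also have "\<dots> = sqrt (norm q) ^ (2 * (j*(j+1) div 2))"
    by (rule power_mult[symmetric])
  also have "\<dots> = sqrt (norm q) ^ (j*(j+1))" by (simp only: ev)
  finally show ?thesis .
qed

lemma summ_u:
  fixes s \<rho> :: real
  assumes "0 \<le> s" "s < 1" "0 \<le> \<rho>"
  shows "summable (\<lambda>j. s^(j*(j+1)) * \<rho>^j)"
proof -
  have eq: "s^(j*(j+1)) * \<rho>^j = (s^(j+1)*\<rho>)^j" for j
  proof -
    have "s^(j*(j+1)) = (s^(j+1))^j" by (metis power_mult mult.commute)
    then show ?thesis by (simp add: power_mult_distrib)
  qed
  have "(\<lambda>j. (s*\<rho>) * s^j) \<longlonglongrightarrow> 0"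
  proof -
    have "(\<lambda>j. s^j) \<longlonglongrightarrow> 0" using assms by (intro LIMSEQ_power_zero) auto
    from tendsto_mult[OF tendsto_const this, of "s*\<rho>"] show ?thesis by simp
  qed
  then have "\<forall>\<^sub>F j in sequentially. (s*\<rho>) * s^j < 1/2"
    by (rule order_tendstoD) simp
  then have ev: "\<forall>\<^sub>F j in sequentially. norm (s^(j*(j+1)) * \<rho>^j) \<le> (1/2)^j"
  proof (rule eventually_mono)
    fix j assume "(s*\<rho>) * s^j < 1/2"
    then have "s^(j+1)*\<rho> \<le> 1/2" by (simp add: algebra_simps)
    then have "(s^(j+1)*\<rho>)^j \<le> (1/2)^j" using assms by (intro power_mono) auto
    then show "norm (s^(j*(j+1)) * \<rho>^j) \<le> (1/2)^j" using assms by (simp only: eq) simp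
  qed
  show ?thesis by (rule summable_comparison_test_ev[OF ev]) (intro summable_geometric, simp)
qed

lemma norm_term: "norm (coef q j * z^j) = sqrt (norm q) ^ (j*(j+1)) * norm z ^ j"
  by (simp add: norm_mult norm_power norm_coef)

lemma summable_pt:
  assumes "norm q < 1"
  shows "summable (\<lambda>j. norm (coef q j * z^j))"
  unfolding norm_term using assms by (intro summ_u) auto

lemma pt_deriv:
  assumes "norm q < 1"
  shows "(partial_theta q has_field_derivative (\<Sum>n. diffs (coef q) n * z^n)) (at z)"
  unfolding pt_eq
  by (rule termdiffs_strong_converges_everywhere) (rule summable_norm_cancel[OF summable_pt[OF assms]])

lemma pt_holo: "norm q < 1 \<Longrightarrow> partial_theta q holomorphic_on UNIV"
  using pt_deriv by (auto simp: holomorphic_on_open)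

lemma pt_0: "partial_theta q 0 = 1"
proof -
  have "partial_theta q 0 = (\<Sum>j. coef q j * 0^j)" by (simp add: pt_eq)
  also have "\<dots> = coef q 0" by (rule powser_zero)
  finally show ?thesis by (simp add: coef_def)
qed

lemma pt_deriv0: "norm q < 1 \<Longrightarrow> (partial_theta q has_field_derivative q) (at 0)"
proof -
  assume q: "norm q < 1"
  have "(\<Sum>n. diffs (coef q) n * 0^n) = diffs (coef q) 0" by (rule powser_zero)
  also have "\<dots> = q" by (simp add: diffs_def coef_def)
  finally show ?thesis using pt_deriv[OF q, of 0] by simp
qed

lemma pt_nonconst:
  assumes "norm q < 1" "q \<noteq> 0"
  shows "\<not> partial_theta q constant_on UNIV"
proof
  assume "partial_theta q constant_on UNIV"
  then obtain c where c: "\<And>z. partial_theta q z = c" unfolding constant_on_def by auto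
  then have "partial_theta q = (\<lambda>_. c)" by auto
  then have "(partial_theta q has_field_derivative 0) (at 0)" by simp
  with pt_deriv0[OF assms(1)] have "q = 0" using DERIV_unique by blast
  with assms show False by simp
qed

lemma expo_helper:
  fixes s t :: real
  assumes st: "s * t = 1" and e: "a + d = b + c"
  shows "s^a * t^c = s^b * t^d"
proof -
  have s0: "s \<noteq> 0" using st by auto
  have "s^a * t^c * s^(c+d) = s^(a+d) * (s*t)^c"
    by (simp add: power_add power_mult_distrib algebra_simps)
  also have "\<dots> = s^(b+c)" using st e by simp
  also have "\<dots> = s^b * t^d * s^(c+d) "
  proof -
    have "s^b * t^d * s^(c+d) = s^(b+c) * (s*t)^d"
      by (simp add: power_add power_mult_distrib algebra_simps)
    then show ?thesis using st by simp
  qed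
  finally show ?thesis using s0 by simp
qed


lemma dom:
  assumes q: "0 < norm q" "norm q < 1" and F: "2 * Fsq (sqrt (norm q)) \<le> 1"
    and z: "norm z = (1 / sqrt (norm q)) ^ (2*k+1)"
  shows "norm (partial_theta q z - coef q k * z^k) < norm (coef q k * z^k)"
proof -
  define s where "s = sqrt (norm q)"
  define t where "t = 1 / s"
  define \<rho> where "\<rho> = t ^ (2*k+1)"
  define u where "u = (\<lambda>j. s^(j*(j+1)) * \<rho>^j)"
  have s: "0 < s" "s < 1" using q by (auto simp: s_def)
  have st: "s * t = 1" using s by (simp add: t_def)
  have t: "0 < t" using s by (simp add: t_def)
  have rho: "0 < \<rho>" using t by (simp add: \<rho>_def)
  have hu: "norm (coef q j * z^j) = u j" for j
    unfolding norm_term u_def s_def[symmetric] using z by (simp add: \<rho>_def t_def s_def)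
  have su: "summable u" unfolding u_def using s rho by (intro summ_u) auto
  have rhoj: "\<rho>^j = t^((2*k+1)*j)" for j by (simp only: \<rho>_def power_mult)
  have ukpos: "0 < u k" using s rho by (simp add: u_def)
  have shift: "u (m + k) = u k * s^(m^2)" for m
  proof -
    have e: "(m+k)*(m+k+1) + (2*k+1)*k = (k*(k+1) + m^2) + (2*k+1)*(m+k)"
      by (simp add: algebra_simps power2_eq_square)
    have "u (m+k) = s^((m+k)*(m+k+1)) * t^((2*k+1)*(m+k))" by (simp add: u_def rhoj)
    also have "\<dots> = s^(k*(k+1) + m^2) * t^((2*k+1)*k)" by (rule expo_helper[OF st e])
    also have "\<dots> = u k * s^(m^2)" by (simp add: u_def rhoj power_add)
    finally show ?thesis .
  qed
  have before: "u j = u k * s^((k-j)^2)" if "j < k" for j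
  proof -
    obtain m where k: "k = j + m" using \<open>j < k\<close> less_imp_add_positive by blast
    have e: "j*(j+1) + (2*k+1)*k = (k*(k+1) + m^2) + (2*k+1)*j"
      unfolding k by (simp add: algebra_simps power2_eq_square)
    have "u j = s^(j*(j+1)) * t^((2*k+1)*j)" by (simp add: u_def rhoj)
    also have "\<dots> = s^(k*(k+1) + m^2) * t^((2*k+1)*k)" by (rule expo_helper[OF st e])
    also have "\<dots> = u k * s^(m^2)" by (simp add: u_def rhoj power_add)
    finally show ?thesis using k by simp
  qed
  have sq_summ: "summable (\<lambda>m. s^(m^2))"
  proof (rule summable_comparison_test[OF _ summable_geometric[of s]])
    show "\<exists>N. \<forall>n\<ge>N. norm (s^(n^2)) \<le> s^n"
      using s by (intro exI[of _ 0] allI impI) (auto intro!: power_decreasing simp: power2_eq_square)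
  qed (use s in auto)
  have sq_sum: "(\<Sum>m. s^(m^2)) = 1 + Fsq s"
  proof -
    have "(\<Sum>n. s^((Suc n)^2)) = (\<Sum>m. s^(m^2)) - s^(0^2)"
      by (rule suminf_split_head[OF sq_summ])
    then show ?thesis unfolding Fsq_def by simp
  qed
  have part1: "(\<Sum>m. u (m + k)) = u k * (1 + Fsq s)"
    unfolding shift by (subst suminf_mult[OF sq_summ]) (simp add: sq_sum)
  have part2: "(\<Sum>j<k. u j) = u k * (\<Sum>i<k. s^((i+1)^2))"
  proof -
    have "(\<Sum>j<k. u j) = (\<Sum>j<k. u k * s^((k-j)^2))" by (intro sum.cong) (auto simp: before)
    also have "\<dots> = u k * (\<Sum>j<k. s^((k-j)^2))" by (simp add: sum_distrib_left)
    also have "(\<Sum>j<k. s^((k-j)^2)) = (\<Sum>i<k. s^((k - (k - Suc i))^2))"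
      by (rule sum.nat_diff_reindex[symmetric])
    also have "\<dots> = (\<Sum>i<k. s^((i+1)^2))" by (intro sum.cong) auto
    finally show ?thesis .
  qed
  have part3: "(\<Sum>i<k. s^((i+1)^2)) < Fsq s"
    unfolding Fsq_def using s by (intro sum_less_suminf Fsq_summable) auto
  have Fs: "2 * Fsq s \<le> 1" using F by (simp add: s_def)
  have total: "suminf u < 2 * u k"
  proof -
    have "suminf u = (\<Sum>m. u (m + k)) + (\<Sum>j<k. u j)" by (rule suminf_split_initial_segment[OF su])
    also have "\<dots> = u k * (1 + Fsq s + (\<Sum>i<k. s^((i+1)^2)))" by (simp add: part1 part2 algebra_simps)
    also have "\<dots> < u k * (1 + 2 * Fsq s)" using part3 ukpos by (intro mult_strict_left_mono) auto
    also have "\<dots> \<le> u k * 2" using Fs ukpos by (intro mult_left_mono) auto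
    finally show ?thesis by simp
  qed
  define f where "f = (\<lambda>j. coef q j * z^j)"
  define g where "g = (\<lambda>j. f j - (if j = k then f k else 0))"
  have fs: "f sums partial_theta q z" unfolding f_def pt_eq
    using summable_norm_cancel[OF summable_pt[OF q(2)]] by (rule summable_sums)
  have gs: "g sums (partial_theta q z - f k)" unfolding g_def
    by (intro sums_diff fs sums_single)
  have ng: "norm (g j) = u j - (if j = k then u k else 0)" for j
    using hu[of j] by (simp add: g_def f_def)
  have sng: "(\<lambda>j. norm (g j)) sums (suminf u - u k)" unfolding ng
    by (intro sums_diff summable_sums su sums_single)
  have "norm (partial_theta q z - f k) = norm (suminf g)" using gs by (simp add: sums_iff)
  also have "\<dots> \<le> (\<Sum>j. norm (g j))" using sng by (intro summable_norm) (simp add: sums_iff)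
  also have "\<dots> = suminf u - u k" using sng by (simp add: sums_iff)
  also have "\<dots> < u k" using total by simp
  also have "u k = norm (f k)" by (simp add: f_def hu)
  finally show ?thesis by (simp add: f_def)
qed


lemma nozero_circle:
  assumes q: "0 < norm q" "norm q < 1" and F: "2 * Fsq (sqrt (norm q)) \<le> 1"
    and z: "norm z = (1 / sqrt (norm q)) ^ (2*k+1)"
  shows "partial_theta q z \<noteq> 0"
  using dom[OF q F z] by auto

lemma pt_finite_zeros:
  assumes q: "0 < norm q" "norm q < 1"
  shows "finite {p. partial_theta q p = 0 \<and> norm p < r}"
proof -
  have "finite {p\<in>cball 0 r. partial_theta q p = 0}"
    using q by (intro holomorphic_compact_finite_zeros[OF pt_holo open_UNIV connected_UNIV compact_cball subset_UNIV] pt_nonconst) auto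
  then show ?thesis by (rule finite_subset[rotated]) auto
qed

lemma count:
  assumes q: "0 < norm q" "norm q < 1" and F: "2 * Fsq (sqrt (norm q)) \<le> 1"
  shows "(\<Sum>p\<in>{p. partial_theta q p = 0 \<and> norm p < (1 / sqrt (norm q)) ^ (2*k+1)}. zorder (partial_theta q) p) = int k"
proof -
  define r where "r = (1 / sqrt (norm q)) ^ (2*k+1)"
  define \<theta> where "\<theta> = partial_theta q"
  define f where "f = (\<lambda>z. coef q k * z^k)"
  define g where "g = (\<lambda>z. \<theta> z - coef q k * z^k)"
  define S where "S = ball (0::complex) (r+1)"
  define \<gamma> where "\<gamma> = circlepath 0 r"
  have r: "0 < r" using q by (simp add: r_def)
  have fg: "(\<lambda>p. f p + g p) = \<theta>" by (simp add: f_def g_def fun_eq_iff)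
  have holo: "\<theta> holomorphic_on S" unfolding \<theta>_def
    using pt_holo[OF q(2)] by (rule holomorphic_on_subset) auto
  have ck: "coef q k \<noteq> 0" using q by (simp add: coef_def)
  have pimg: "path_image \<gamma> = sphere 0 r" using r by (simp add: \<gamma>_def path_image_circlepath)
  have R: "(\<Sum>p\<in>{p\<in>S. (\<lambda>p. f p + g p) p = 0}. winding_number \<gamma> p * of_int (zorder (\<lambda>p. f p + g p) p))
          = (\<Sum>p\<in>{p\<in>S. f p = 0}. winding_number \<gamma> p * of_int (zorder f p))"
  proof (rule Rouche_theorem)
    show "open S" "connected S" by (auto simp: S_def)
    show "finite {p \<in> S. f p + g p = 0}"
      using pt_finite_zeros[OF q, of "r+1"] unfolding fg[unfolded fun_eq_iff, rule_format]
      by (rule finite_subset[rotated]) (auto simp: S_def \<theta>_def)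
    show "finite {p \<in> S. f p = 0}"
      by (rule finite_subset[of _ "{0}"]) (auto simp: f_def ck)
    show "f holomorphic_on S" unfolding f_def by (intro holomorphic_intros)
    show "g holomorphic_on S" unfolding g_def by (intro holomorphic_intros holo)
    show "valid_path \<gamma>" by (simp add: \<gamma>_def)
    show "pathfinish \<gamma> = pathstart \<gamma>" by (simp add: \<gamma>_def)
    show "path_image \<gamma> \<subseteq> S" using r by (auto simp: pimg S_def)
    show "\<forall>z\<in>path_image \<gamma>. cmod (g z) < cmod (f z)"
      using dom[OF q F] by (auto simp: pimg g_def f_def \<theta>_def r_def)
    show "\<forall>z. z \<notin> S \<longrightarrow> winding_number \<gamma> z = 0"
    proof (intro allI impI)
      fix z assume "z \<notin> S"
      then show "winding_number \<gamma> z = 0" using r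
        by (intro winding_number_zero_outside[of _ "cball 0 r"]) (auto simp: \<gamma>_def pimg S_def)
    qed
  qed
  have rhs: "(\<Sum>p\<in>{p\<in>S. f p = 0}. winding_number \<gamma> p * of_int (zorder f p)) = of_nat k"
  proof (cases "k = 0")
    case True
    then have e: "{p\<in>S. f p = 0} = {}" by (auto simp: f_def coef_def)
    show ?thesis unfolding e using True by simp
  next
    case False
    then have e: "{p\<in>S. f p = 0} = {0}" using r ck by (auto simp: f_def S_def)
    have "zorder f 0 = int k"
    proof (rule zorder_eqI[of UNIV 0 "\<lambda>_. coef q k"])
      show "f w = coef q k * (w - 0) powi int k" for w by (simp add: f_def power_int_of_nat)
    qed (use ck in auto)
    then show ?thesis unfolding e using r by (simp add: \<gamma>_def winding_number_circlepath_centre)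
  qed
  have wn: "winding_number \<gamma> p = (if norm p < r then 1 else 0)" if "\<theta> p = 0" for p
  proof -
    have "norm p \<noteq> r" using nozero_circle[OF q F] that by (auto simp: r_def \<theta>_def)
    show ?thesis
    proof (cases "norm p < r")
      case True then show ?thesis by (simp add: \<gamma>_def winding_number_circlepath)
    next
      case False
      with \<open>norm p \<noteq> r\<close> have "norm p > r" by simp
      then have "winding_number \<gamma> p = 0" using r
        by (intro winding_number_zero_outside[of _ "cball 0 r"]) (auto simp: \<gamma>_def pimg)
      then show ?thesis using False by simp
    qed
  qed
  have fin: "finite {p\<in>S. \<theta> p = 0}"
    using pt_finite_zeros[OF q, of "r+1"] by (rule finite_subset[rotated]) (auto simp: S_def \<theta>_def)
  have set_eq: "{p\<in>{p\<in>S. \<theta> p = 0}. norm p < r} = {p. \<theta> p = 0 \<and> norm p < r}"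
    by (auto simp: S_def)
  have set_eq2: "{x \<in> S. \<theta> x = 0 \<and> norm x < r} = {p. \<theta> p = 0 \<and> norm p < r}"
    by (auto simp: S_def)
  have "(\<Sum>p\<in>{p\<in>S. \<theta> p = 0}. winding_number \<gamma> p * of_int (zorder \<theta> p))
      = (\<Sum>p\<in>{p\<in>S. \<theta> p = 0}. if norm p < r then of_int (zorder \<theta> p) else 0)"
    by (intro sum.cong) (auto simp: wn)
  also have "\<dots> = (\<Sum>p\<in>{p. \<theta> p = 0 \<and> norm p < r}. of_int (zorder \<theta> p))"
    by (subst sum.inter_filter[OF fin, symmetric]) (simp add: set_eq set_eq2)
  also have "\<dots> = (of_int (\<Sum>p\<in>{p. \<theta> p = 0 \<and> norm p < r}. zorder \<theta> p) :: complex)"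
    by simp
  finally have "(of_int (\<Sum>p\<in>{p. \<theta> p = 0 \<and> norm p < r}. zorder \<theta> p) :: complex) = of_int (int k)"
    using R rhs fg[unfolded fun_eq_iff, rule_format] unfolding fg by simp
  then show ?thesis unfolding r_def[symmetric] \<theta>_def[symmetric] by (simp only: of_int_eq_iff)
qed


lemma zorder_pos:
  assumes q: "0 < norm q" "norm q < 1" and p: "partial_theta q p = 0"
  shows "zorder (partial_theta q) p > 0"
proof -
  have "\<exists>w\<in>UNIV. partial_theta q w \<noteq> 0" by (intro bexI[of _ 0]) (simp_all add: pt_0)
  from zorder_exist_zero[OF pt_holo[OF q(2)] open_UNIV connected_UNIV UNIV_I this, of p] p
  show ?thesis by simp
qed

lemma simple_deriv:
  assumes q: "0 < norm q" "norm q < 1" and p: "partial_theta q p = 0"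
    and z1: "zorder (partial_theta q) p = 1"
  shows "deriv (partial_theta q) p \<noteq> 0"
proof -
  define g where "g = zor_poly (partial_theta q) p"
  have "\<exists>w\<in>UNIV. partial_theta q w \<noteq> 0" by (intro bexI[of _ 0]) (simp_all add: pt_0)
  from zorder_exist_zero[OF pt_holo[OF q(2)] open_UNIV connected_UNIV UNIV_I this, of p]
  obtain r where r: "r > 0" "g holomorphic_on cball p r"
      and eq: "\<forall>w\<in>cball p r. partial_theta q w = g w * (w - p) ^ nat 1 \<and> g w \<noteq> 0"
    unfolding z1 g_def by blast
  have "g holomorphic_on ball p r" using r(2) by (rule holomorphic_on_subset) auto
  then have "g field_differentiable (at p)"
    using r(1) by (intro holomorphic_on_imp_differentiable_at) auto
  then obtain g' where dg: "(g has_field_derivative g') (at p)"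
    unfolding field_differentiable_def by blast
  have d1: "((\<lambda>w. g w * (w - p)) has_field_derivative g p) (at p)"
    by (auto intro!: derivative_eq_intros dg)
  have "(partial_theta q has_field_derivative g p) (at p)"
  proof (rule has_field_derivative_transform_within_open[OF d1, of "ball p r"])
    show "open (ball p r)" "p \<in> ball p r" using r by auto
    show "g x * (x - p) = partial_theta q x" if "x \<in> ball p r" for x
      using eq that by auto
  qed
  then have "deriv (partial_theta q) p = g p" by (rule DERIV_imp_deriv)
  moreover have "g p \<noteq> 0" using eq r by auto
  ultimately show ?thesis by simp
qed

lemma sum_one_singleton:
  fixes h :: "'a \<Rightarrow> int"
  assumes "finite X" "\<And>x. x \<in> X \<Longrightarrow> h x \<ge> 1" "sum h X = 1"
  shows "\<exists>p. X = {p} \<and> h p = 1"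
proof -
  have "int (card X) = (\<Sum>x\<in>X. 1)" by simp
  also have "\<dots> \<le> sum h X" using assms(2) by (intro sum_mono) auto
  finally have "card X \<le> 1" using assms(3) by simp
  moreover have "X \<noteq> {}" using assms(3) by auto
  ultimately have "card X = 1" using assms(1) by (simp add: Suc_leI card_gt_0_iff le_antisym)
  then obtain p where "X = {p}" by (rule card_1_singletonE)
  then show ?thesis using assms(3) by auto
qed

theorem lemma1:
  fixes q :: complex
  assumes "0 < norm q" and "norm q \<le> c0"
  shows "\<exists>\<xi> :: nat \<Rightarrow> complex.
           {z. partial_theta q z = 0} = range \<xi> \<and>
           (\<forall>n. norm (\<xi> n) < norm (\<xi> (Suc n))) \<and>
           filterlim (\<lambda>n. norm (\<xi> n)) at_top sequentially \<and>
           (\<forall>n. deriv (partial_theta q) (\<xi> n) \<noteq> 0)"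
proof -
  have c0: "0 < c0" "c0 < 1" "2 * Fsq (sqrt c0) = 1" using c0_prop by auto
  have q: "0 < norm q" "norm q < 1" using assms c0 by auto
  have F: "2 * Fsq (sqrt (norm q)) \<le> 1"
    using Fsq_mono[of "sqrt (norm q)" "sqrt c0"] assms c0 by auto
  define \<theta> where "\<theta> = partial_theta q"
  define t where "t = 1 / sqrt (norm q)"
  define r where "r = (\<lambda>k::nat. t ^ (2*k+1))"
  define Z where "Z = (\<lambda>x. {p. \<theta> p = 0 \<and> norm p < x})"
  have t1: "1 < t" using q by (simp add: t_def)
  have finZ: "finite (Z x)" for x unfolding Z_def \<theta>_def by (rule pt_finite_zeros[OF q])
  have cnt: "(\<Sum>p\<in>Z (r k). zorder \<theta> p) = int k" for k
    using count[OF q F, of k] by (simp add: Z_def r_def t_def \<theta>_def)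
  have pos: "zorder \<theta> p \<ge> 1" if "\<theta> p = 0" for p
    using zorder_pos[OF q, of p] that by (simp add: \<theta>_def)
  have rmono: "r k < r (Suc k)" for k
    unfolding r_def using t1 by (intro power_strict_increasing) auto
  have Zsub: "Z (r k) \<subseteq> Z (r (Suc k))" for k using rmono[of k] by (auto simp: Z_def)
  define A where "A = (\<lambda>k. Z (r (Suc k)) - Z (r k))"
  have sumA: "(\<Sum>p\<in>A k. zorder \<theta> p) = 1" for k
  proof -
    have "(\<Sum>p\<in>Z (r (Suc k)). zorder \<theta> p) = (\<Sum>p\<in>A k. zorder \<theta> p) + (\<Sum>p\<in>Z (r k). zorder \<theta> p)"
      unfolding A_def by (rule sum.subset_diff[OF Zsub finZ])
    then show ?thesis using cnt[of k] cnt[of "Suc k"] by simp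
  qed
  have "\<exists>p. A k = {p} \<and> zorder \<theta> p = 1" for k
  proof (rule sum_one_singleton[OF _ _ sumA])
    show "finite (A k)" by (simp add: A_def finZ)
  qed (auto simp: A_def Z_def intro: pos)
  then obtain \<xi> where \<xi>: "\<And>k. A k = {\<xi> k} \<and> zorder \<theta> (\<xi> k) = 1" by metis
  have \<xi>A: "\<xi> k \<in> A k" for k using \<xi>[of k] by auto
  have \<xi>0: "\<theta> (\<xi> k) = 0" for k using \<xi>A[of k] by (auto simp: A_def Z_def)
  have \<xi>lt: "norm (\<xi> k) < r (Suc k)" for k using \<xi>A[of k] by (auto simp: A_def Z_def)
  have \<xi>ge: "r k \<le> norm (\<xi> k)" for k using \<xi>A[of k] \<xi>0[of k] by (auto simp: A_def Z_def)
  have Z0: "Z (r 0) = {}"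
  proof (rule ccontr)
    assume ne: "Z (r 0) \<noteq> {}"
    have "int (card (Z (r 0))) = (\<Sum>x\<in>Z (r 0). 1)" by simp
    also have "\<dots> \<le> (\<Sum>p\<in>Z (r 0). zorder \<theta> p)" by (intro sum_mono pos) (auto simp: Z_def)
    also have "\<dots> = 0" using cnt[of 0] by simp
    finally show False using ne finZ[of "r 0"] by (simp add: card_gt_0_iff)
  qed
  have inrange: "\<forall>p. \<theta> p = 0 \<and> norm p < r k \<longrightarrow> p \<in> range \<xi>" for k
  proof (induction k)
    case 0 then show ?case using Z0 by (auto simp: Z_def)
  next
    case (Suc k)
    show ?case
    proof (intro allI impI)
      fix p assume p: "\<theta> p = 0 \<and> norm p < r (Suc k)"
      show "p \<in> range \<xi>"
      proof (cases "norm p < r k")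
        case True then show ?thesis using Suc p by blast
      next
        case False
        then have "p \<in> A k" using p by (auto simp: A_def Z_def)
        then show ?thesis using \<xi>[of k] by auto
      qed
    qed
  qed
  have tr: "t ^ n \<le> r n" for n unfolding r_def using t1 by (intro power_increasing) auto
  have "{z. partial_theta q z = 0} = range \<xi>"
  proof
    show "{z. partial_theta q z = 0} \<subseteq> range \<xi>"
    proof
      fix p assume "p \<in> {z. partial_theta q z = 0}"
      then have p: "\<theta> p = 0" by (simp add: \<theta>_def)
      obtain n where "norm p < t ^ n" using real_arch_pow[OF t1] by blast
      then have "norm p < r n" using tr[of n] by simp
      then show "p \<in> range \<xi>" using inrange p by blast
    qed
    show "range \<xi> \<subseteq> {z. partial_theta q z = 0}" using \<xi>0 by (auto simp: \<theta>_def)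
  qed
  moreover have "\<forall>n. norm (\<xi> n) < norm (\<xi> (Suc n))"
    using \<xi>lt \<xi>ge by (meson less_le_trans)
  moreover have "filterlim (\<lambda>n. norm (\<xi> n)) at_top sequentially"
    unfolding filterlim_at_top
  proof
    fix B :: real
    obtain N where N: "B < t ^ N" using real_arch_pow[OF t1] by blast
    show "\<forall>\<^sub>F n in sequentially. B \<le> norm (\<xi> n)"
      unfolding eventually_sequentially
    proof (intro exI allI impI)
      fix n assume "N \<le> n"
      then have "t ^ N \<le> t ^ n" using t1 by (intro power_increasing) auto
      then show "B \<le> norm (\<xi> n)" using N tr[of n] \<xi>ge[of n] by linarith
    qed
  qed
  moreover have "\<forall>n. deriv (partial_theta q) (\<xi> n) \<noteq> 0"
    using simple_deriv[OF q] \<xi>0 \<xi> by (auto simp: \<theta>_def)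
  ultimately show ?thesis by blast
qed

end
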